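(* Let $m\geq 3$ and let $i,k$ be nonnegative integers with $i+k\leq m$. Write $P_{i,k}:=E^*_{i+k}A_1E^*_{i+k-1}A_1E^*_{i+k-2}\cdots E^*_{i+1}A_1E^*_{i}$. Then: (i) if $i$ is even and $k$ is odd, $P_{i,k}=\big((\tfrac{k-1}{2})!\big)^2\,\tfrac{k+1}{2}\,M^{\frac{k-1}{2},\frac{k-1}{2}}_{\frac{i+k-1}{2},\frac{2m-i}{2}}$; (ii) if $i$ is even and $k\geq2$ is even, $P_{i,k}=\big((\tfrac{k}{2})!\big)^2\,M^{\frac{2m-k}{2},\frac{2m-i-k}{2}}_{\frac{2m-i-k}{2},\frac{2m-i}{2}}$; (iii) if $i$ is odd and $k$ is odd, $P_{i,k}=\big((\tfrac{k-1}{2})!\big)^2\,\tfrac{k+1}{2}\,M^{\frac{k-1}{2},0}_{\frac{2m-i-k}{2},\frac{i-1}{2}}$; (iv) if $i$ is odd and $k\geq 2$ is even, $P_{i,k}=\big((\tfrac{k}{2})!\big)^2\,M^{\frac{2m-k}{2},\frac{i-1}{2}}_{\frac{i+k-1}{2},\frac{i-1}{2}}$.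
   Context: Let $m\geq3$, $S=\{1,\ldots,2m+1\}$, $X$ the set of $m$-subsets of $S$, and $O_{m+1}$ the Odd graph on $X$ (adjacency = disjointness). Its distance is $\partial(x,y)=2|x\cap y|+1$ if $|x\cap y|\leq\lfloor\frac{m-1}{2}\rfloor$ and $2m-2|x\cap y|$ otherwise. Let $x_0=\{1,\ldots,m\}$, $A_1$ the adjacency matrix, and $E^*_i$ ($0\leq i\leq m$) the diagonal $X\times X$ matrix with $(y,y)$-entry $1$ iff $\partial(x_0,y)=i$. For integers $i,j,t,p$, $M^{t,p}_{i,j}$ denotes the $X\times X$ $0/1$-matrix whose $(x,y)$-entry is $1$ iff $|x_0\cap x|=i$, $|x_0\cap y|=j$, $|x\cap y|=t$ and $|x_0\cap x\cap y|=p$. *)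

theory Defs
  imports Main
begin

definition groundS :: "nat \<Rightarrow> nat set" where
  "groundS m = {1..2*m+1}"

definition verts :: "nat \<Rightarrow> nat set set" where
  "verts m = {x. x \<subseteq> groundS m \<and> card x = m}"

text \<open>Distance in the Odd graph O_(m+1), as given in the context.\<close>
definition odist :: "nat \<Rightarrow> nat set \<Rightarrow> nat set \<Rightarrow> nat" where
  "odist m x y = (if card (x \<inter> y) \<le> (m - 1) div 2 then 2 * card (x \<inter> y) + 1
                   else 2 * m - 2 * card (x \<inter> y))"

definition base_x0 :: "nat \<Rightarrow> nat set" where
  "base_x0 m = {1..m}"

text \<open>X x X matrices are represented as functions; entries outside X are 0.\<close>
type_synonym mat = "nat set \<Rightarrow> nat set \<Rightarrow> int"

definition mmult :: "nat \<Rightarrow> mat \<Rightarrow> mat \<Rightarrow> mat" where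
  "mmult m A B = (\<lambda>x y. \<Sum>z\<in>verts m. A x z * B z y)"

definition adjA :: "nat \<Rightarrow> mat" where
  "adjA m = (\<lambda>x y. if x \<in> verts m \<and> y \<in> verts m \<and> x \<inter> y = {} then 1 else 0)"

definition Estar :: "nat \<Rightarrow> nat \<Rightarrow> mat" where
  "Estar m i = (\<lambda>x y. if x \<in> verts m \<and> x = y \<and> odist m (base_x0 m) y = i then 1 else 0)"

text \<open>M^{t,p}_{i,j}\<close>
definition Mmat :: "nat \<Rightarrow> nat \<Rightarrow> nat \<Rightarrow> nat \<Rightarrow> nat \<Rightarrow> mat" where
  "Mmat m i j t p = (\<lambda>x y. if x \<in> verts m \<and> y \<in> verts m
      \<and> card (base_x0 m \<inter> x) = i \<and> card (base_x0 m \<inter> y) = j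
      \<and> card (x \<inter> y) = t \<and> card (base_x0 m \<inter> x \<inter> y) = p then 1 else 0)"

fun Pmat :: "nat \<Rightarrow> nat \<Rightarrow> nat \<Rightarrow> mat" where
  "Pmat m i 0 = Estar m i"
| "Pmat m i (Suc k) = mmult m (mmult m (Estar m (i + Suc k)) (adjA m)) (Pmat m i k)"

end

theory Submission
  imports Defs
begin

definition dd :: "nat \<Rightarrow> nat \<Rightarrow> nat" where
 "dd m a = (if a \<le> (m-1) div 2 then 2*a+1 else 2*m-2*a)"
lemma dd_odd: assumes "a \<le> m" "2*c+1 \<le> m" shows "dd m a = 2*c+1 \<longleftrightarrow> a = c"
proof (cases "a \<le> (m-1) div 2")
  case True then show ?thesis unfolding dd_def by simp
next
  case False
  have "2*m-2*a \<noteq> 2*c+1" by presburger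
  moreover have "a \<noteq> c" using False assms(2) by linarith
  ultimately show ?thesis using False unfolding dd_def by simp
qed
lemma dd_even: assumes "a \<le> m" "2*c \<le> m" "1 \<le> m" shows "dd m a = 2*c \<longleftrightarrow> a = m - c"
proof (cases "a \<le> (m-1) div 2")
  case True
  have "2*a+1 \<noteq> 2*c" by presburger
  moreover have "2 * ((m-1) div 2) \<le> m-1" by simp
  then have "a \<noteq> m - c" using True assms(2,3) by linarith
  ultimately show ?thesis using True unfolding dd_def by simp
next
  case False
  then show ?thesis using assms unfolding dd_def by auto
qed

definition SS :: "nat \<Rightarrow> nat \<Rightarrow> nat \<Rightarrow> nat \<Rightarrow> nat \<Rightarrow> nat \<Rightarrow> nat \<Rightarrow> nat \<Rightarrow> nat \<Rightarrow> (nat \<Rightarrow> nat \<Rightarrow> nat \<Rightarrow> int) \<Rightarrow> int" where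
 "SS m a t p b n1 n2 n3 n4 G = int n1 * G (m-a-1) (m-t-1) (b-p-1) + int n2 * G (m-a-1) (m-t) (b-p)
    + int n3 * G (m-a) (m-t-1) (b-p) + int n4 * G (m-a) (m-t) (b-p)"

definition ind :: "bool \<Rightarrow> int" where "ind P = (if P then 1 else 0)"

lemma ind_F: "\<not> P \<Longrightarrow> ind P = 0" by (simp add: ind_def)
lemma ind_T: "P \<Longrightarrow> ind P = 1" by (simp add: ind_def)

lemma ee:
  fixes a t p b n1 n2 n3 n4 j s m :: nat and f :: int
  assumes A: "2*j+2*s+1 \<le> m" and hpa: "p \<le> a" and hpt: "p \<le> t" and hpb: "p \<le> b" and ha: "a \<le> m" and ht: "t \<le> m"
    and hb: "b \<le> m" and hat: "a+t \<le> m+p"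
    and h1: "n1 = b - p" and h2: "int n2 = int m - int b - int a + int p" and h3: "int n3 = int m - int b - int t + int p"
    and h4: "int n4 = int a + int b + int t - int p + 1 - int m"
  shows "(if dd m a = 2*j+(2*s+1) then SS m a t p b n1 n2 n3 n4
       (\<lambda>a' t' p'. f * ind (a' = m-j-s \<and> b = m-j \<and> t' = m-s \<and> p' = m-j-s))
    else 0) = f * int (s+1) * ind (a = j+s \<and> b = m-j \<and> t = s \<and> p = s)"
proof (cases "a = j+s")
  case True
  obtain r where mr: "m = 2*j+2*s+1 + r" using A le_Suc_ex by blast
  have hd: "dd m a = 2*j+(2*s+1)" using dd_odd[of a m "j+s"] A ha True by simp
  have c1: "m-a-1 \<noteq> m-j-s" using True mr by simp
  have c3: "\<not> (b = m-j \<and> m-t-1 = m-s \<and> b-p = m-j-s)" using True mr hpt hpb ht by auto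
  have c4: "(m-a = m-j-s \<and> b = m-j \<and> m-t = m-s \<and> b-p = m-j-s) = (a = j+s \<and> b = m-j \<and> t = s \<and> p = s)"
    using True mr hpb ht by auto
  have n4: "(a = j+s \<and> b = m-j \<and> t = s \<and> p = s) \<Longrightarrow> n4 = s+1" using h4 A by linarith
  have e1: "ind (m-a-1 = m-j-s \<and> b = m-j \<and> m-t-1 = m-s \<and> b-p-1 = m-j-s) = 0" by (rule ind_F) (use c1 in blast)
  have e2: "ind (m-a-1 = m-j-s \<and> b = m-j \<and> m-t = m-s \<and> b-p = m-j-s) = 0" by (rule ind_F) (use c1 in blast)
  have e3: "ind (m-a = m-j-s \<and> b = m-j \<and> m-t-1 = m-s \<and> b-p = m-j-s) = 0" by (rule ind_F) (use c3 in blast)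
  have e4: "ind (m-a = m-j-s \<and> b = m-j \<and> m-t = m-s \<and> b-p = m-j-s) = ind (a = j+s \<and> b = m-j \<and> t = s \<and> p = s)"
    by (simp only: c4)
  show ?thesis
  proof (cases "a = j+s \<and> b = m-j \<and> t = s \<and> p = s")
    case T: True
    show ?thesis unfolding SS_def using n4[OF T] by (simp only: hd if_True e1 e2 e3 e4 ind_T[OF T]) simp
  next
    case F: False
    show ?thesis unfolding SS_def by (simp only: hd if_True e1 e2 e3 e4 ind_F[OF F]) simp
  qed
next
  case False
  then have "dd m a \<noteq> 2*j+(2*s+1)" using dd_odd[of a m "j+s"] A ha by simp
  then show ?thesis using False by (simp add: ind_def)
qed

lemma eo:
  fixes a t p b n1 n2 n3 n4 j s m :: nat and f :: int
  assumes A: "2*j+2*s+2 \<le> m" and hpa: "p \<le> a" and hpt: "p \<le> t" and hpb: "p \<le> b" and ha: "a \<le> m" and ht: "t \<le> m"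
    and hb: "b \<le> m" and hat: "a+t \<le> m+p"
    and h1: "n1 = b - p" and h2: "int n2 = int m - int b - int a + int p" and h3: "int n3 = int m - int b - int t + int p"
    and h4: "int n4 = int a + int b + int t - int p + 1 - int m"
  shows "(if dd m a = 2*j+(2*s+2) then SS m a t p b n1 n2 n3 n4
       (\<lambda>a' t' p'. f * int (s+1) * ind (a' = j+s \<and> b = m-j \<and> t' = s \<and> p' = s))
    else 0) = f * int (s+1) * int (s+1) * ind (a = m-j-s-1 \<and> b = m-j \<and> t = m-s-1 \<and> p = m-j-s-1)"
proof (cases "a = m-j-s-1")
  case True
  obtain r where mr: "m = 2*j+2*s+2 + r" using A le_Suc_ex by blast
  have hbt: "b + t \<le> m + p" using h3 by linarith
  have hd: "dd m a = 2*j+(2*s+2)" using dd_even[of a m "j+s+1"] A ha True by simp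
  have c1: "(m-a-1 = j+s \<and> b = m-j \<and> m-t-1 = s \<and> b-p-1 = s) = (a = m-j-s-1 \<and> b = m-j \<and> t = m-s-1 \<and> p = m-j-s-1)"
    using True mr ht hpb hpa hbt by auto
  have n1: "(a = m-j-s-1 \<and> b = m-j \<and> t = m-s-1 \<and> p = m-j-s-1) \<Longrightarrow> n1 = s+1" using h1 A by linarith
  have c2: "\<not> (b = m-j \<and> m-t = s \<and> b-p = s)" using True mr hpa ht hpb by auto
  have c3: "m-a \<noteq> j+s" using True mr by simp
  have e1: "ind (m-a-1 = j+s \<and> b = m-j \<and> m-t-1 = s \<and> b-p-1 = s) = ind (a = m-j-s-1 \<and> b = m-j \<and> t = m-s-1 \<and> p = m-j-s-1)"
    by (simp only: c1)
  have e2: "ind (m-a-1 = j+s \<and> b = m-j \<and> m-t = s \<and> b-p = s) = 0" by (rule ind_F) (use c2 in blast)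
  have e3: "ind (m-a = j+s \<and> b = m-j \<and> m-t-1 = s \<and> b-p = s) = 0" by (rule ind_F) (use c3 in blast)
  have e4: "ind (m-a = j+s \<and> b = m-j \<and> m-t = s \<and> b-p = s) = 0" by (rule ind_F) (use c3 in blast)
  show ?thesis
  proof (cases "a = m-j-s-1 \<and> b = m-j \<and> t = m-s-1 \<and> p = m-j-s-1")
    case T: True
    show ?thesis unfolding SS_def using n1[OF T] by (simp only: hd if_True e1 e2 e3 e4 ind_T[OF T]) simp
  next
    case F: False
    show ?thesis unfolding SS_def by (simp only: hd if_True e1 e2 e3 e4 ind_F[OF F]) simp
  qed
next
  case False
  then have "dd m a \<noteq> 2*j+(2*s+2)" using dd_even[of a m "j+s+1"] A ha by simp
  then show ?thesis using False by (simp add: ind_def)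
qed

lemma oe:
  fixes a t p b n1 n2 n3 n4 j s m :: nat and f :: int
  assumes A: "2*j+1+2*s+1 \<le> m" and hpa: "p \<le> a" and hpt: "p \<le> t" and hpb: "p \<le> b" and ha: "a \<le> m" and ht: "t \<le> m"
    and hb: "b \<le> m" and hat: "a+t \<le> m+p"
    and h1: "n1 = b - p" and h2: "int n2 = int m - int b - int a + int p" and h3: "int n3 = int m - int b - int t + int p"
    and h4: "int n4 = int a + int b + int t - int p + 1 - int m"
  shows "(if dd m a = 2*j+1+(2*s+1) then SS m a t p b n1 n2 n3 n4
       (\<lambda>a' t' p'. f * ind (a' = j+s \<and> b = j \<and> t' = m-s \<and> p' = j))
    else 0) = f * int (s+1) * ind (a = m-j-s-1 \<and> b = j \<and> t = s \<and> p = 0)"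
proof (cases "a = m-j-s-1")
  case True
  obtain r where mr0: "m = 2*j+1+2*s+1 + r" using A le_Suc_ex by blast
  have mr: "m = 2*j+2*s+2 + r" using mr0 by simp
  have hd: "dd m a = 2*j+1+(2*s+1)" using dd_even[of a m "j+s+1"] A ha True by simp
  have c1: "b = j \<and> b-p-1 = j \<Longrightarrow> n1 = 0" using h1 by linarith
  have c2: "(m-a-1 = j+s \<and> b = j \<and> m-t = m-s \<and> b-p = j) = (a = m-j-s-1 \<and> b = j \<and> t = s \<and> p = 0)"
    using True mr ht hpb by auto
  have n2: "(a = m-j-s-1 \<and> b = j \<and> t = s \<and> p = 0) \<Longrightarrow> n2 = s+1" using h2 A by linarith
  have c3: "m-a \<noteq> j+s" using True mr by simp
  have e1: "int n1 * (f * ind (m-a-1 = j+s \<and> b = j \<and> m-t-1 = m-s \<and> b-p-1 = j)) = 0"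
  proof (cases "b = j \<and> b-p-1 = j")
    case True then have "n1 = 0" using c1 by blast
    then show ?thesis by simp
  next
    case False
    have "ind (m-a-1 = j+s \<and> b = j \<and> m-t-1 = m-s \<and> b-p-1 = j) = 0" by (rule ind_F) (use False in blast)
    then show ?thesis by simp
  qed
  have e2: "ind (m-a-1 = j+s \<and> b = j \<and> m-t = m-s \<and> b-p = j) = ind (a = m-j-s-1 \<and> b = j \<and> t = s \<and> p = 0)"
    by (simp only: c2)
  have e3: "ind (m-a = j+s \<and> b = j \<and> m-t-1 = m-s \<and> b-p = j) = 0" by (rule ind_F) (use c3 in blast)
  have e4: "ind (m-a = j+s \<and> b = j \<and> m-t = m-s \<and> b-p = j) = 0" by (rule ind_F) (use c3 in blast)
  show ?thesis
  proof (cases "a = m-j-s-1 \<and> b = j \<and> t = s \<and> p = 0")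
    case T: True
    show ?thesis unfolding SS_def using n2[OF T] by (simp only: hd if_True e1 e2 e3 e4 ind_T[OF T]) simp
  next
    case F: False
    show ?thesis unfolding SS_def by (simp only: hd if_True e1 e2 e3 e4 ind_F[OF F]) simp
  qed
next
  case False
  then have "dd m a \<noteq> 2*j+1+(2*s+1)" using dd_even[of a m "j+s+1"] A ha by simp
  then show ?thesis using False by (simp add: ind_def)
qed

lemma oo:
  fixes a t p b n1 n2 n3 n4 j s m :: nat and f :: int
  assumes A: "2*j+1+2*s+2 \<le> m" and hpa: "p \<le> a" and hpt: "p \<le> t" and hpb: "p \<le> b" and ha: "a \<le> m" and ht: "t \<le> m"
    and hb: "b \<le> m" and hat: "a+t \<le> m+p"
    and h1: "n1 = b - p" and h2: "int n2 = int m - int b - int a + int p" and h3: "int n3 = int m - int b - int t + int p"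
    and h4: "int n4 = int a + int b + int t - int p + 1 - int m"
  shows "(if dd m a = 2*j+1+(2*s+2) then SS m a t p b n1 n2 n3 n4
       (\<lambda>a' t' p'. f * int (s+1) * ind (a' = m-j-s-1 \<and> b = j \<and> t' = s \<and> p' = 0))
    else 0) = f * int (s+1) * int (s+1) * ind (a = j+s+1 \<and> b = j \<and> t = m-s-1 \<and> p = j)"
proof (cases "a = j+s+1")
  case True
  obtain r where mr0: "m = 2*j+1+2*s+2 + r" using A le_Suc_ex by blast
  have mr: "m = 2*j+2*s+3 + r" using mr0 by simp
  have hd: "dd m a = 2*j+1+(2*s+2)" using dd_odd[of a m "j+s+1"] A ha True by simp
  have c1: "m-a-1 \<noteq> m-j-s-1" using True mr by simp
  have c3a: "(a = j+s+1 \<and> b = j \<and> t = m-s-1 \<and> p = j) \<Longrightarrow> (m-a = m-j-s-1 \<and> b = j \<and> m-t-1 = s \<and> b-p = 0)"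
    using True mr by auto
  have c3b: "(m-a = m-j-s-1 \<and> b = j \<and> m-t-1 = s \<and> b-p = 0) \<Longrightarrow> t \<noteq> m \<Longrightarrow> (a = j+s+1 \<and> b = j \<and> t = m-s-1 \<and> p = j)"
    using True mr ht hpb by auto
  have c3c: "(m-a = m-j-s-1 \<and> b = j \<and> m-t-1 = s \<and> b-p = 0) \<Longrightarrow> t = m \<Longrightarrow> n3 = 0"
    using hpb h3 by linarith
  have n3: "(a = j+s+1 \<and> b = j \<and> t = m-s-1 \<and> p = j) \<Longrightarrow> n3 = s+1" using h3 A by linarith
  have c4: "\<not> (b = j \<and> m-t = s \<and> b-p = 0)" using True mr hat ht hpb by auto
  have e1: "ind (m-a-1 = m-j-s-1 \<and> b = j \<and> m-t-1 = s \<and> b-p-1 = 0) = 0" by (rule ind_F) (use c1 in blast)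
  have e2: "ind (m-a-1 = m-j-s-1 \<and> b = j \<and> m-t = s \<and> b-p = 0) = 0" by (rule ind_F) (use c1 in blast)
  have e4: "ind (m-a = m-j-s-1 \<and> b = j \<and> m-t = s \<and> b-p = 0) = 0" by (rule ind_F) (use c4 in blast)
  have e3: "int n3 * (f * int (s+1) * ind (m-a = m-j-s-1 \<and> b = j \<and> m-t-1 = s \<and> b-p = 0))
     = int n3 * (f * int (s+1) * ind (a = j+s+1 \<and> b = j \<and> t = m-s-1 \<and> p = j))"
  proof (cases "m-a = m-j-s-1 \<and> b = j \<and> m-t-1 = s \<and> b-p = 0")
    case C: True
    show ?thesis
    proof (cases "t = m")
      case True then show ?thesis using c3c[OF C] by simp
    next
      case False
      have T: "a = j+s+1 \<and> b = j \<and> t = m-s-1 \<and> p = j" using c3b[OF C False] .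
      show ?thesis by (simp only: ind_T[OF C] ind_T[OF T])
    qed
  next
    case C: False
    have NT: "\<not> (a = j+s+1 \<and> b = j \<and> t = m-s-1 \<and> p = j)" using c3a C by blast
    show ?thesis by (simp only: ind_F[OF C] ind_F[OF NT])
  qed
  show ?thesis
  proof (cases "a = j+s+1 \<and> b = j \<and> t = m-s-1 \<and> p = j")
    case T: True
    show ?thesis unfolding SS_def by (simp only: hd if_True e1 e2 e3 e4 ind_T[OF T]) (simp add: n3[OF T])
  next
    case F: False
    show ?thesis unfolding SS_def by (simp only: hd if_True e1 e2 e3 e4 ind_F[OF F]) simp
  qed
next
  case False
  then have "dd m a \<noteq> 2*j+1+(2*s+2)" using dd_odd[of a m "j+s+1"] A ha by simp
  then show ?thesis using False by (simp add: ind_def)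
qed


lemma fin_verts: "finite (verts m)"
proof -
  have "verts m \<subseteq> Pow (groundS m)" unfolding verts_def by auto
  then show ?thesis by (rule finite_subset) (simp add: groundS_def)
qed

lemma card_S: "card (groundS m) = 2*m+1" by (simp add: groundS_def)
lemma X0_sub: "base_x0 m \<subseteq> groundS m" by (auto simp: base_x0_def groundS_def)
lemma card_X0: "card (base_x0 m) = m" by (simp add: base_x0_def)

lemma verts_D: "x \<in> verts m \<Longrightarrow> x \<subseteq> groundS m \<and> card x = m \<and> finite x"
  unfolding verts_def by (auto simp: groundS_def intro: finite_subset)

lemma Pmat_Suc:
  assumes x: "x \<in> verts m"
  shows "Pmat m i (Suc k) x y = (if odist m (base_x0 m) x = i + Suc k
      then (\<Sum>z\<in>{z\<in>verts m. z \<inter> x = {}}. Pmat m i k z y) else 0)"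
proof -
  have inner: "(\<Sum>w\<in>verts m. Estar m (i + Suc k) x w * adjA m w z) =
     (if odist m (base_x0 m) x = i + Suc k then adjA m x z else 0)" for z
  proof -
    have "(\<Sum>w\<in>verts m. Estar m (i + Suc k) x w * adjA m w z) =
        (\<Sum>w\<in>verts m. if w = x then (if odist m (base_x0 m) x = i + Suc k then adjA m x z else 0) else 0)"
      by (rule sum.cong) (auto simp: Estar_def x)
    also have "\<dots> = (if odist m (base_x0 m) x = i + Suc k then adjA m x z else 0)"
      using x fin_verts by (simp add: sum.delta')
    finally show ?thesis .
  qed
  have "Pmat m i (Suc k) x y = (\<Sum>z\<in>verts m. (if odist m (base_x0 m) x = i + Suc k then adjA m x z else 0) * Pmat m i k z y)"
    unfolding Pmat.simps mmult_def by (simp only: inner)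
  also have "\<dots> = (if odist m (base_x0 m) x = i + Suc k then (\<Sum>z\<in>verts m. if z \<inter> x = {} then Pmat m i k z y else 0) else 0)"
    by (auto intro!: sum.cong simp: adjA_def x Int_commute)
  also have "\<dots> = (if odist m (base_x0 m) x = i + Suc k then (\<Sum>z\<in>{z\<in>verts m. z \<inter> x = {}}. Pmat m i k z y) else 0)"
    using fin_verts by (simp add: sum.inter_filter)
  finally show ?thesis .
qed

lemma nbr_sum:
  assumes x: "x \<in> verts m"
  shows "(\<Sum>z\<in>{z\<in>verts m. z \<inter> x = {}}. g z) = (\<Sum>e\<in>groundS m - x. g (groundS m - x - {e}))"
proof -
  let ?S = "groundS m"
  have xs: "x \<subseteq> ?S" "card x = m" "finite x" using verts_D[OF x] by auto
  have cSx: "card (?S - x) = m + 1" using xs card_S[of m] by (simp add: card_Diff_subset)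
  have fS: "finite ?S" by (simp add: groundS_def)
  have "bij_betw (\<lambda>e. ?S - x - {e}) (?S - x) {z\<in>verts m. z \<inter> x = {}}"
  proof (rule bij_betw_imageI)
    show "inj_on (\<lambda>e. ?S - x - {e}) (?S - x)"
      by (auto simp: inj_on_def)
    show "(\<lambda>e. ?S - x - {e}) ` (?S - x) = {z\<in>verts m. z \<inter> x = {}}"
    proof
      show "(\<lambda>e. ?S - x - {e}) ` (?S - x) \<subseteq> {z\<in>verts m. z \<inter> x = {}}"
      proof
        fix z assume "z \<in> (\<lambda>e. ?S - x - {e}) ` (?S - x)"
        then obtain e where e: "e \<in> ?S - x" "z = ?S - x - {e}" by auto
        have "card z = m" using e cSx fS by (simp add: card_Diff_singleton)
        then show "z \<in> {z\<in>verts m. z \<inter> x = {}}" using e by (auto simp: verts_def)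
      qed
    next
      show "{z\<in>verts m. z \<inter> x = {}} \<subseteq> (\<lambda>e. ?S - x - {e}) ` (?S - x)"
      proof
        fix z assume z: "z \<in> {z\<in>verts m. z \<inter> x = {}}"
        then have zs: "z \<subseteq> ?S - x" "card z = m" using verts_D[of z m] by auto
        have "card (?S - x - z) = 1" using zs cSx fS by (simp add: card_Diff_subset finite_subset)
        then obtain e where e: "?S - x - z = {e}" by (auto simp: card_Suc_eq)
        have "z = ?S - x - {e}" using e zs by blast
        moreover have "e \<in> ?S - x" using e by blast
        ultimately show "z \<in> (\<lambda>e. ?S - x - {e}) ` (?S - x)" by blast
      qed
    qed
  qed
  then show ?thesis by (rule sum.reindex_bij_betw[symmetric])
qed

lemma region_sum:
  fixes F :: "bool \<Rightarrow> bool \<Rightarrow> int"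
  assumes "finite A"
  shows "(\<Sum>e\<in>A. F (e \<in> B) (e \<in> Y)) = int (card (A \<inter> B \<inter> Y)) * F True True + int (card (A \<inter> B - Y)) * F True False
     + int (card ((A - B) \<inter> Y)) * F False True + int (card (A - B - Y)) * F False False"
proof -
  have fin: "finite (A \<inter> B)" "finite (A - B)" using assms by auto
  have "(\<Sum>e\<in>A. F (e \<in> B) (e \<in> Y)) = (\<Sum>e\<in>A \<inter> B. F (e \<in> B) (e \<in> Y)) + (\<Sum>e\<in>A - B. F (e \<in> B) (e \<in> Y))"
    using assms by (rule sum.Int_Diff)
  also have "(\<Sum>e\<in>A \<inter> B. F (e \<in> B) (e \<in> Y)) = (\<Sum>e\<in>A \<inter> B \<inter> Y. F (e \<in> B) (e \<in> Y)) + (\<Sum>e\<in>A \<inter> B - Y. F (e \<in> B) (e \<in> Y))"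
    using fin(1) by (rule sum.Int_Diff)
  also have "(\<Sum>e\<in>A - B. F (e \<in> B) (e \<in> Y)) = (\<Sum>e\<in>(A - B) \<inter> Y. F (e \<in> B) (e \<in> Y)) + (\<Sum>e\<in>A - B - Y. F (e \<in> B) (e \<in> Y))"
    using fin(2) by (rule sum.Int_Diff)
  also have "(\<Sum>e\<in>A \<inter> B \<inter> Y. F (e \<in> B) (e \<in> Y)) = (\<Sum>e\<in>A \<inter> B \<inter> Y. F True True)" by (rule sum.cong) auto
  also have "(\<Sum>e\<in>A \<inter> B - Y. F (e \<in> B) (e \<in> Y)) = (\<Sum>e\<in>A \<inter> B - Y. F True False)" by (rule sum.cong) auto
  also have "(\<Sum>e\<in>(A - B) \<inter> Y. F (e \<in> B) (e \<in> Y)) = (\<Sum>e\<in>(A - B) \<inter> Y. F False True)" by (rule sum.cong) auto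
  also have "(\<Sum>e\<in>A - B - Y. F (e \<in> B) (e \<in> Y)) = (\<Sum>e\<in>A - B - Y. F False False)" by (rule sum.cong) auto
  finally show ?thesis by (simp add: Diff_Int_distrib2 Int_Diff)
qed



lemma region_facts:
  assumes x: "x \<in> verts m" and y: "y \<in> verts m"
  defines "X0 \<equiv> base_x0 m" and "S \<equiv> groundS m"
  defines "a \<equiv> card (X0 \<inter> x)" and "t \<equiv> card (x \<inter> y)" and "p \<equiv> card (X0 \<inter> x \<inter> y)" and "b \<equiv> card (X0 \<inter> y)"
  defines "n1 \<equiv> card ((S - x) \<inter> X0 \<inter> y)" and "n2 \<equiv> card ((S - x) \<inter> X0 - y)"
    and "n3 \<equiv> card ((S - x - X0) \<inter> y)" and "n4 \<equiv> card (S - x - X0 - y)"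
  shows "p \<le> a \<and> p \<le> t \<and> p \<le> b \<and> a \<le> m \<and> t \<le> m \<and> b \<le> m \<and> a + t \<le> m + p \<and> n1 = b - p
     \<and> int n2 = int m - int b - int a + int p \<and> int n3 = int m - int b - int t + int p
     \<and> int n4 = int a + int b + int t - int p + 1 - int m"
proof -
  have xs: "x \<subseteq> S" "card x = m" "finite x" using verts_D[OF x] unfolding S_def by auto
  have ys: "y \<subseteq> S" "card y = m" "finite y" using verts_D[OF y] unfolding S_def by auto
  have X0s: "X0 \<subseteq> S" "card X0 = m" "finite X0" unfolding X0_def S_def using X0_sub card_X0
    by (auto simp: base_x0_def)
  have fS: "finite S" "card S = 2*m+1" unfolding S_def by (auto simp: groundS_def)
  have i1: "p \<le> a" unfolding p_def a_def by (rule card_mono) (use X0s in auto)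
  have i2: "p \<le> t" unfolding p_def t_def by (rule card_mono) (use xs in auto)
  have i3: "p \<le> b" unfolding p_def b_def by (rule card_mono) (use X0s in auto)
  have i4: "a \<le> m" unfolding a_def using card_mono[of X0 "X0 \<inter> x"] X0s by auto
  have i5: "t \<le> m" unfolding t_def using card_mono[of x "x \<inter> y"] xs by auto
  have i6: "b \<le> m" unfolding b_def using card_mono[of X0 "X0 \<inter> y"] X0s by auto
  have u1: "card (X0 \<inter> x) + card (x \<inter> y) = card ((X0 \<inter> x) \<union> (x \<inter> y)) + card ((X0 \<inter> x) \<inter> (x \<inter> y))"
    by (rule card_Un_Int) (use xs in auto)
  have u1b: "card ((X0 \<inter> x) \<union> (x \<inter> y)) \<le> m" using card_mono[of x "(X0 \<inter> x) \<union> (x \<inter> y)"] xs by auto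
  have u1c: "(X0 \<inter> x) \<inter> (x \<inter> y) = X0 \<inter> x \<inter> y" by blast
  have i7: "a + t \<le> m + p" using u1 u1b u1c unfolding a_def t_def p_def by simp
  have d1: "card (X0 \<inter> y) = card (X0 \<inter> y \<inter> x) + card (X0 \<inter> y - x)" by (rule card_Int_Diff) (use X0s in auto)
  have s1: "(S - x) \<inter> X0 \<inter> y = X0 \<inter> y - x" using X0s by blast
  have s1b: "X0 \<inter> y \<inter> x = X0 \<inter> x \<inter> y" by blast
  have r1: "n1 = b - p" using d1 unfolding n1_def s1 b_def p_def s1b by simp
  have d2: "card X0 = card (X0 \<inter> (x \<union> y)) + card (X0 - (x \<union> y))" by (rule card_Int_Diff) (use X0s in auto)
  have u2: "card (X0 \<inter> x) + card (X0 \<inter> y) = card ((X0 \<inter> x) \<union> (X0 \<inter> y)) + card ((X0 \<inter> x) \<inter> (X0 \<inter> y))"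
    by (rule card_Un_Int) (use X0s in auto)
  have s2: "(S - x) \<inter> X0 - y = X0 - (x \<union> y)" "(X0 \<inter> x) \<union> (X0 \<inter> y) = X0 \<inter> (x \<union> y)"
    "(X0 \<inter> x) \<inter> (X0 \<inter> y) = X0 \<inter> x \<inter> y" using X0s by blast+
  have r2: "int n2 = int m - int b - int a + int p"
    using d2 u2 X0s(2) unfolding n2_def s2 a_def b_def p_def by simp
  have d3: "card y = card (y \<inter> (X0 \<union> x)) + card (y - (X0 \<union> x))" by (rule card_Int_Diff) (use ys in auto)
  have e3: "(X0 \<inter> y) \<union> (x \<inter> y) = y \<inter> (X0 \<union> x)" "(X0 \<inter> y) \<inter> (x \<inter> y) = X0 \<inter> x \<inter> y" by blast+
  have u3: "card (X0 \<inter> y) + card (x \<inter> y) = card (y \<inter> (X0 \<union> x)) + card (X0 \<inter> x \<inter> y)"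
    using card_Un_Int[of "X0 \<inter> y" "x \<inter> y"] ys X0s unfolding e3 by simp
  have s3: "(S - x - X0) \<inter> y = y - (X0 \<union> x)" using ys by blast
  have r3: "int n3 = int m - int b - int t + int p"
    using d3 u3 ys(2) unfolding n3_def s3 b_def t_def p_def by simp
  have d4: "card S = card (S \<inter> (x \<union> X0 \<union> y)) + card (S - (x \<union> X0 \<union> y))" by (rule card_Int_Diff) (use fS in auto)
  have e4: "S \<inter> (x \<union> X0 \<union> y) = x \<union> X0 \<union> y" "(x \<union> X0) \<inter> y = (x \<inter> y) \<union> (X0 \<inter> y)"
     "(x \<inter> y) \<inter> (X0 \<inter> y) = X0 \<inter> x \<inter> y" "x \<inter> X0 = X0 \<inter> x" "S - x - X0 - y = S - (x \<union> X0 \<union> y)"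
    using xs ys X0s by blast+
  have d4': "card S = card (x \<union> X0 \<union> y) + card (S - x - X0 - y)" using d4 unfolding e4 .
  have u4: "card (x \<union> X0) + card y = card (x \<union> X0 \<union> y) + card ((x \<inter> y) \<union> (X0 \<inter> y))"
    using card_Un_Int[of "x \<union> X0" y] xs ys X0s unfolding e4 by simp
  have u5: "card x + card X0 = card (x \<union> X0) + card (X0 \<inter> x)"
    using card_Un_Int[of x X0] xs ys X0s unfolding e4 by simp
  have u6: "card (x \<inter> y) + card (X0 \<inter> y) = card ((x \<inter> y) \<union> (X0 \<inter> y)) + card (X0 \<inter> x \<inter> y)"
    using card_Un_Int[of "x \<inter> y" "X0 \<inter> y"] xs ys X0s unfolding e4 by simp
  have r4: "int n4 = int a + int b + int t - int p + 1 - int m"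
    using d4' u4 u5 u6 xs(2) ys(2) X0s(2) fS(2) unfolding n4_def a_def b_def t_def p_def by simp
  show ?thesis using i1 i2 i3 i4 i5 i6 i7 r1 r2 r3 r4 by blast
qed



lemma odist_dd: "odist m (base_x0 m) x = dd m (card (base_x0 m \<inter> x))"
  unfolding odist_def dd_def by simp

lemma card_rm: "finite A \<Longrightarrow> card (A - {e}) = card A - (if e \<in> A then 1 else 0)"
  by (simp add: card_Diff_singleton_if)

lemma step_sum:
  fixes G :: "nat \<Rightarrow> nat \<Rightarrow> nat \<Rightarrow> int"
  assumes x: "x \<in> verts m" and y: "y \<in> verts m"
  defines "X0 \<equiv> base_x0 m" and "S \<equiv> groundS m"
  defines "a \<equiv> card (X0 \<inter> x)" and "t \<equiv> card (x \<inter> y)" and "p \<equiv> card (X0 \<inter> x \<inter> y)" and "b \<equiv> card (X0 \<inter> y)"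
  defines "n1 \<equiv> card ((S - x) \<inter> X0 \<inter> y)" and "n2 \<equiv> card ((S - x) \<inter> X0 - y)"
    and "n3 \<equiv> card ((S - x - X0) \<inter> y)" and "n4 \<equiv> card (S - x - X0 - y)"
  shows "(\<Sum>z\<in>{z\<in>verts m. z \<inter> x = {}}. G (card (X0 \<inter> z)) (card (z \<inter> y)) (card (X0 \<inter> z \<inter> y)))
      = SS m a t p b n1 n2 n3 n4 G"
proof -
  have xs: "x \<subseteq> S" "card x = m" "finite x" using verts_D[OF x] unfolding S_def by auto
  have ys: "y \<subseteq> S" "card y = m" "finite y" using verts_D[OF y] unfolding S_def by auto
  have X0s: "X0 \<subseteq> S" "card X0 = m" "finite X0" unfolding X0_def S_def using X0_sub card_X0
    by (auto simp: base_x0_def)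
  have fS: "finite S" unfolding S_def by (auto simp: groundS_def)
  define F where "F = (\<lambda>u v. G (m - a - (if u then 1 else 0)) (m - t - (if v then 1 else 0)) (b - p - (if u \<and> v then 1 else 0)))"
  have cX: "card (X0 - x) = m - a" unfolding a_def using X0s by (simp add: card_Diff_subset_Int)
  have cY: "card (y - x) = m - t" unfolding t_def using ys by (simp add: card_Diff_subset_Int Int_commute)
  have cXY: "card (X0 \<inter> y - x) = b - p" unfolding b_def p_def using X0s
    by (simp add: card_Diff_subset_Int Int_commute Int_left_commute)
  have summand: "G (card (X0 \<inter> (S - x - {e}))) (card ((S - x - {e}) \<inter> y)) (card (X0 \<inter> (S - x - {e}) \<inter> y)) = F (e \<in> X0) (e \<in> y)"
    if e: "e \<in> S - x" for e
  proof -
    have q1: "X0 \<inter> (S - x - {e}) = (X0 - x) - {e}" using X0s by blast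
    have q2: "(S - x - {e}) \<inter> y = (y - x) - {e}" using ys by blast
    have q3: "X0 \<inter> (S - x - {e}) \<inter> y = (X0 \<inter> y - x) - {e}" using X0s by blast
    have k1: "card (X0 \<inter> (S - x - {e})) = m - a - (if e \<in> X0 then 1 else 0)"
      unfolding q1 using X0s e cX by (simp add: card_rm)
    have k2: "card ((S - x - {e}) \<inter> y) = m - t - (if e \<in> y then 1 else 0)"
      unfolding q2 using ys e cY by (simp add: card_rm)
    have k3: "card (X0 \<inter> (S - x - {e}) \<inter> y) = b - p - (if e \<in> X0 \<and> e \<in> y then 1 else 0)"
      unfolding q3 using X0s e cXY by (simp add: card_rm)
    show ?thesis unfolding k1 k2 k3 F_def ..
  qed
  have "(\<Sum>z\<in>{z\<in>verts m. z \<inter> x = {}}. G (card (X0 \<inter> z)) (card (z \<inter> y)) (card (X0 \<inter> z \<inter> y)))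
      = (\<Sum>e\<in>S - x. G (card (X0 \<inter> (S - x - {e}))) (card ((S - x - {e}) \<inter> y)) (card (X0 \<inter> (S - x - {e}) \<inter> y)))"
    unfolding S_def by (rule nbr_sum[OF x])
  also have "\<dots> = (\<Sum>e\<in>S - x. F (e \<in> X0) (e \<in> y))" by (rule sum.cong) (simp_all add: summand)
  also have "\<dots> = int n1 * F True True + int n2 * F True False + int n3 * F False True + int n4 * F False False"
    unfolding n1_def n2_def n3_def n4_def using fS by (simp add: region_sum)
  also have "\<dots> = SS m a t p b n1 n2 n3 n4 G" unfolding SS_def F_def by simp
  finally show ?thesis .
qed



definition HH :: "nat \<Rightarrow> nat \<Rightarrow> nat \<Rightarrow> nat \<Rightarrow> nat \<Rightarrow> nat \<Rightarrow> nat \<Rightarrow> int" where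
"HH m i k a t p b = (if even i then (if even k then int (fact (k div 2) ^ 2) * ind (a = m - i div 2 - k div 2 \<and> b = m - i div 2 \<and> t = m - k div 2 \<and> p = m - i div 2 - k div 2)
  else int (fact (k div 2) ^ 2) * int (k div 2 + 1) * ind (a = i div 2 + k div 2 \<and> b = m - i div 2 \<and> t = k div 2 \<and> p = k div 2))
 else (if even k then int (fact (k div 2) ^ 2) * ind (a = i div 2 + k div 2 \<and> b = i div 2 \<and> t = m - k div 2 \<and> p = i div 2)
  else int (fact (k div 2) ^ 2) * int (k div 2 + 1) * ind (a = m - i div 2 - k div 2 - 1 \<and> b = i div 2 \<and> t = k div 2 \<and> p = 0)))"

lemma HH_ee: "HH m (2*j) (2*s) a t p b = int (fact s ^ 2) * ind (a = m-j-s \<and> b = m-j \<and> t = m-s \<and> p = m-j-s)"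
  unfolding HH_def by simp
lemma HH_eo: "HH m (2*j) (2*s+1) a t p b = int (fact s ^ 2) * int (s+1) * ind (a = j+s \<and> b = m-j \<and> t = s \<and> p = s)"
  unfolding HH_def by simp
lemma HH_oe: "HH m (2*j+1) (2*s) a t p b = int (fact s ^ 2) * ind (a = j+s \<and> b = j \<and> t = m-s \<and> p = j)"
  unfolding HH_def by simp
lemma HH_oo: "HH m (2*j+1) (2*s+1) a t p b = int (fact s ^ 2) * int (s+1) * ind (a = m-j-s-1 \<and> b = j \<and> t = s \<and> p = 0)"
  unfolding HH_def by simp
lemma fact_sq: "int (fact (s+1) ^ 2) = int (fact s ^ 2) * int (s+1) * int (s+1)"
  by (simp add: power2_eq_square algebra_simps)
lemma HH_ee2: "HH m (2*j) (2*s+2) a t p b = int (fact s ^ 2) * int (s+1) * int (s+1) * ind (a = m-j-s-1 \<and> b = m-j \<and> t = m-s-1 \<and> p = m-j-s-1)"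
proof -
  have "HH m (2*j) (2*(s+1)) a t p b = int (fact (s+1) ^ 2) * ind (a = m-j-(s+1) \<and> b = m-j \<and> t = m-(s+1) \<and> p = m-j-(s+1))"
    by (rule HH_ee)
  moreover have "2*(s+1) = 2*s+2" by simp
  ultimately show ?thesis unfolding fact_sq by simp
qed
lemma HH_oe2: "HH m (2*j+1) (2*s+2) a t p b = int (fact s ^ 2) * int (s+1) * int (s+1) * ind (a = j+s+1 \<and> b = j \<and> t = m-s-1 \<and> p = j)"
proof -
  have "HH m (2*j+1) (2*(s+1)) a t p b = int (fact (s+1) ^ 2) * ind (a = j+(s+1) \<and> b = j \<and> t = m-(s+1) \<and> p = j)"
    by (rule HH_oe)
  moreover have "2*(s+1) = 2*s+2" by simp
  ultimately show ?thesis unfolding fact_sq by simp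
qed

lemma step_arith:
  fixes a t p b n1 n2 n3 n4 i k m :: nat
  assumes A: "i + Suc k \<le> m" and hpa: "p \<le> a" and hpt: "p \<le> t" and hpb: "p \<le> b" and ha: "a \<le> m" and ht: "t \<le> m"
    and hb: "b \<le> m" and hat: "a+t \<le> m+p"
    and h1: "n1 = b - p" and h2: "int n2 = int m - int b - int a + int p" and h3: "int n3 = int m - int b - int t + int p"
    and h4: "int n4 = int a + int b + int t - int p + 1 - int m"
  shows "(if dd m a = i + Suc k then SS m a t p b n1 n2 n3 n4 (\<lambda>a' t' p'. HH m i k a' t' p' b) else 0)
    = HH m i (Suc k) a t p b"
proof -
  obtain j where ij: "i = 2*j \<or> i = 2*j+1" by (metis oddE evenE)
  obtain s where ks: "k = 2*s \<or> k = 2*s+1" by (metis oddE evenE)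
  show ?thesis
  proof (cases "i = 2*j")
    case I: True
    show ?thesis
    proof (cases "k = 2*s")
      case K: True
      have e1: "i + Suc k = 2*j+(2*s+1)" "Suc k = 2*s+1" using I K by simp_all
      show ?thesis unfolding e1 unfolding I K HH_ee HH_eo
        by (rule ee) (use A I K hpa hpt hpb ha ht hb hat h1 h2 h3 h4 in auto)
    next
      case False
      then have K: "k = 2*s+1" using ks by simp
      have e1: "i + Suc k = 2*j+(2*s+2)" "Suc k = 2*s+2" using I K by simp_all
      show ?thesis unfolding e1 unfolding I K HH_eo HH_ee2
        by (rule eo) (use A I K hpa hpt hpb ha ht hb hat h1 h2 h3 h4 in auto)
    qed
  next
    case False
    then have I: "i = 2*j+1" using ij by simp
    show ?thesis
    proof (cases "k = 2*s")
      case K: True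
      have e1: "i + Suc k = 2*j+1+(2*s+1)" "Suc k = 2*s+1" using I K by simp_all
      show ?thesis unfolding e1 unfolding I K HH_oe HH_oo
        by (rule oe) (use A I K hpa hpt hpb ha ht hb hat h1 h2 h3 h4 in auto)
    next
      case False
      then have K: "k = 2*s+1" using ks by simp
      have e1: "i + Suc k = 2*j+1+(2*s+2)" "Suc k = 2*s+2" using I K by simp_all
      show ?thesis unfolding e1 unfolding I K HH_oo HH_oe2
        by (rule oo) (use A I K hpa hpt hpb ha ht hb hat h1 h2 h3 h4 in auto)
    qed
  qed
qed



lemma eq_iff_card: assumes "x \<in> verts m" "y \<in> verts m" shows "x = y \<longleftrightarrow> card (x \<inter> y) = m"
proof
  assume "x = y" then show "card (x \<inter> y) = m" using verts_D[OF assms(1)] by simp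
next
  assume c: "card (x \<inter> y) = m"
  have xs: "finite x" "card x = m" "finite y" "card y = m" using verts_D[OF assms(1)] verts_D[OF assms(2)] by auto
  have "x \<inter> y = x" by (rule card_subset_eq) (use xs c in auto)
  moreover have "x \<inter> y = y" by (rule card_subset_eq) (use xs c in auto)
  ultimately show "x = y" by simp
qed

lemma main:
  assumes m1: "1 \<le> m"
  shows "i + k \<le> m \<Longrightarrow> x \<in> verts m \<Longrightarrow> y \<in> verts m \<Longrightarrow>
    Pmat m i k x y = HH m i k (card (base_x0 m \<inter> x)) (card (x \<inter> y)) (card (base_x0 m \<inter> x \<inter> y)) (card (base_x0 m \<inter> y))"
proof (induction k arbitrary: x)
  case 0
  obtain j where ij: "i = 2*j \<or> i = 2*j+1" by (metis oddE evenE)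
  have bm: "card (base_x0 m \<inter> y) \<le> m" using card_mono[of "base_x0 m" "base_x0 m \<inter> y"] card_X0[of m]
    by (auto simp: base_x0_def)
  have E: "Pmat m i 0 x y = ind (card (x \<inter> y) = m \<and> dd m (card (base_x0 m \<inter> y)) = i)"
    using 0 eq_iff_card[of x m y] by (auto simp: Estar_def ind_def odist_dd)
  show ?case
  proof (cases "i = 2*j")
    case True
    have "dd m (card (base_x0 m \<inter> y)) = 2*j \<longleftrightarrow> card (base_x0 m \<inter> y) = m - j"
      by (rule dd_even) (use bm True 0 m1 in auto)
    then show ?thesis unfolding E using True HH_ee[of m j 0] eq_iff_card[of x m y] 0 by (auto simp: ind_def)
  next
    case False
    then have I: "i = 2*j+1" using ij by simp
    have "dd m (card (base_x0 m \<inter> y)) = 2*j+1 \<longleftrightarrow> card (base_x0 m \<inter> y) = j"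
      by (rule dd_odd) (use bm I 0 m1 in auto)
    then show ?thesis unfolding E using I HH_oe[of m j 0] eq_iff_card[of x m y] 0 by (auto simp: ind_def)
  qed
next
  case (Suc k)
  let ?X0 = "base_x0 m" and ?S = "groundS m"
  have x: "x \<in> verts m" and y: "y \<in> verts m" using Suc by auto
  have IH: "Pmat m i k z y = HH m i k (card (?X0 \<inter> z)) (card (z \<inter> y)) (card (?X0 \<inter> z \<inter> y)) (card (?X0 \<inter> y))"
    if "z \<in> verts m" for z using Suc.IH[of z] Suc.prems that by simp
  have "(\<Sum>z\<in>{z\<in>verts m. z \<inter> x = {}}. Pmat m i k z y)
     = (\<Sum>z\<in>{z\<in>verts m. z \<inter> x = {}}. (\<lambda>a' t' p'. HH m i k a' t' p' (card (?X0 \<inter> y))) (card (?X0 \<inter> z)) (card (z \<inter> y)) (card (?X0 \<inter> z \<inter> y)))"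
    by (rule sum.cong) (simp_all add: IH)
  also have "\<dots> = SS m (card (?X0 \<inter> x)) (card (x \<inter> y)) (card (?X0 \<inter> x \<inter> y)) (card (?X0 \<inter> y))
      (card ((?S - x) \<inter> ?X0 \<inter> y)) (card ((?S - x) \<inter> ?X0 - y)) (card ((?S - x - ?X0) \<inter> y)) (card (?S - x - ?X0 - y))
      (\<lambda>a' t' p'. HH m i k a' t' p' (card (?X0 \<inter> y)))"
    by (rule step_sum[OF x y])
  finally have sm: "(\<Sum>z\<in>{z\<in>verts m. z \<inter> x = {}}. Pmat m i k z y) = \<dots>" .
  note R = region_facts[OF x y]
  show ?case unfolding Pmat_Suc[OF x] sm odist_dd
    by (rule step_arith) (use R Suc.prems in auto)
qed

lemma Mmat_ind: "x \<in> verts m \<Longrightarrow> y \<in> verts m \<Longrightarrow> Mmat m A B T P x y =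
   ind (card (base_x0 m \<inter> x) = A \<and> card (base_x0 m \<inter> y) = B \<and> card (x \<inter> y) = T \<and> card (base_x0 m \<inter> x \<inter> y) = P)"
  unfolding Mmat_def ind_def by simp



theorem lemma5p1:
  fixes m i k :: nat
  assumes "m \<ge> 3" and "i + k \<le> m"
  shows
   "(even i \<and> odd k \<longrightarrow> (\<forall>x\<in>verts m. \<forall>y\<in>verts m.
       Pmat m i k x y = int ((fact ((k - 1) div 2))^2 * ((k + 1) div 2))
         * Mmat m ((i + k - 1) div 2) ((2*m - i) div 2) ((k - 1) div 2) ((k - 1) div 2) x y))
  \<and> (even i \<and> even k \<and> k \<ge> 2 \<longrightarrow> (\<forall>x\<in>verts m. \<forall>y\<in>verts m.
       Pmat m i k x y = int ((fact (k div 2))^2)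
         * Mmat m ((2*m - i - k) div 2) ((2*m - i) div 2) ((2*m - k) div 2) ((2*m - i - k) div 2) x y))
  \<and> (odd i \<and> odd k \<longrightarrow> (\<forall>x\<in>verts m. \<forall>y\<in>verts m.
       Pmat m i k x y = int ((fact ((k - 1) div 2))^2 * ((k + 1) div 2))
         * Mmat m ((2*m - i - k) div 2) ((i - 1) div 2) ((k - 1) div 2) 0 x y))
  \<and> (odd i \<and> even k \<and> k \<ge> 2 \<longrightarrow> (\<forall>x\<in>verts m. \<forall>y\<in>verts m.
       Pmat m i k x y = int ((fact (k div 2))^2)
         * Mmat m ((i + k - 1) div 2) ((i - 1) div 2) ((2*m - k) div 2) ((i - 1) div 2) x y))"
proof -
  have m1: "1 \<le> m" using assms(1) by simp
  note M = main[OF m1 assms(2)]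
  show ?thesis
  proof (intro conjI impI ballI)
    fix x y assume h: "even i \<and> odd k" and x: "x \<in> verts m" and y: "y \<in> verts m"
    obtain j where I: "i = 2*j" using h by blast
    obtain s where K: "k = 2*s+1" using h oddE by blast
    have d: "(k-1) div 2 = s" "(k+1) div 2 = s+1" "(i+k-1) div 2 = j+s" "(2*m-i) div 2 = m-j"
      using I K by simp_all
    show "Pmat m i k x y = int ((fact ((k - 1) div 2))^2 * ((k + 1) div 2))
         * Mmat m ((i + k - 1) div 2) ((2*m - i) div 2) ((k - 1) div 2) ((k - 1) div 2) x y"
      unfolding M[OF x y] Mmat_ind[OF x y] d unfolding I K HH_eo by (simp add: algebra_simps)
  next
    fix x y assume h: "even i \<and> even k \<and> 2 \<le> k" and x: "x \<in> verts m" and y: "y \<in> verts m"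
    obtain j where I: "i = 2*j" using h by blast
    obtain s where K: "k = 2*s" using h by blast
    have d: "k div 2 = s" "(2*m - i - k) div 2 = m-j-s" "(2*m-i) div 2 = m-j" "(2*m-k) div 2 = m-s"
      using I K by simp_all
    show "Pmat m i k x y = int ((fact (k div 2))^2)
         * Mmat m ((2*m - i - k) div 2) ((2*m - i) div 2) ((2*m - k) div 2) ((2*m - i - k) div 2) x y"
      unfolding M[OF x y] Mmat_ind[OF x y] d unfolding I K HH_ee by simp
  next
    fix x y assume h: "odd i \<and> odd k" and x: "x \<in> verts m" and y: "y \<in> verts m"
    obtain j where I: "i = 2*j+1" using h oddE by blast
    obtain s where K: "k = 2*s+1" using h oddE by blast
    have d: "(k-1) div 2 = s" "(k+1) div 2 = s+1" "(2*m - i - k) div 2 = m-j-s-1" "(i-1) div 2 = j"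
      using I K by simp_all
    show "Pmat m i k x y = int ((fact ((k - 1) div 2))^2 * ((k + 1) div 2))
         * Mmat m ((2*m - i - k) div 2) ((i - 1) div 2) ((k - 1) div 2) 0 x y"
      unfolding M[OF x y] Mmat_ind[OF x y] d unfolding I K HH_oo by (simp add: algebra_simps)
  next
    fix x y assume h: "odd i \<and> even k \<and> 2 \<le> k" and x: "x \<in> verts m" and y: "y \<in> verts m"
    obtain j where I: "i = 2*j+1" using h oddE by blast
    obtain s where K: "k = 2*s" using h by blast
    have d: "k div 2 = s" "(i + k - 1) div 2 = j+s" "(i-1) div 2 = j" "(2*m-k) div 2 = m-s"
      using I K by simp_all
    show "Pmat m i k x y = int ((fact (k div 2))^2)
         * Mmat m ((i + k - 1) div 2) ((i - 1) div 2) ((2*m - k) div 2) ((i - 1) div 2) x y"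
      unfolding M[OF x y] Mmat_ind[OF x y] d unfolding I K HH_oe by simp
  qed
qed

end
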